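(* Let $(S,1\cdots1)$ be a tree pattern with all edges contiguous, and let $x$ be a vertex of $S$ that has no right child, such that for every edge $(u,v)$ of $S$ with $v$ the right child of $u$, either $v$ is a leaf or $x$ lies in the subtree $S(v)$. Let $(P,e)$ and $(P',e')$ be tree patterns with $P,P'\in\mathcal{T}_k$, and let $Q$ and $Q'$ be the tree patterns obtained from $(S,1\cdots1)$ by attaching $(P,e)$, respectively $(P',e')$, as the right subtree of $x$ via a non-contiguous edge (all other edge types unchanged). If $(P,e)$ and $(P',e')$ are Wilf-equivalent, then $Q$ and $Q'$ are Wilf-equivalent.
   Context: $\mathcal{T}_n$ is the set of binary trees on $n$ vertices labeled $1,\dots,n$ by the search tree property (after attaching subtrees, vertex labels are reassigned according to this property). $c_L,c_R,p$: left child, right child, parent. A tree pattern is $(P,e)$, $P\in\mathcal{T}_k$, $e\colon[k]\setminus\{\text{root}\}\to\{0,1\}$; the edge $(i,p(i))$ is contiguous if $e(i)=1$ and non-contiguous if $e(i)=0$. $T\in\mathcal{T}_n$ contains $(P,e)$ if there is an injection $f\colon[k]\to[n]$ such that for every non-root $i$ of $P$: if $e(i)=1$, $f(i)$ is the left (resp. right) child of $f(p(i))$ when $i$ is the left (resp. right) child of $p(i)$; if $e(i)=0$, $f(i)$ lies in the left (resp. right) subtree of $f(p(i))$. $\mathcal{T}_n(P,e)$ is the set of avoiders. Two tree patterns $Q,Q'$ are Wilf-equivalent if $|\mathcal{T}_n(Q)|=|\mathcal{T}_n(Q')|$ for all $n\ge0$. *)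

theory Defs
  imports Main
begin

text \<open>Unlabelled binary trees; the search-tree labelling of a tree in T_n is
determined by its shape, so T_n is identified with the shapes having n vertices.
A vertex is addressed by its path from the root (False = left, True = right);
the left/right child of vertex v is v @ [False] / v @ [True].\<close>

datatype btree = Leaf | Node btree btree

fun tsize :: "btree \<Rightarrow> nat" where
  "tsize Leaf = 0"
| "tsize (Node l r) = Suc (tsize l + tsize r)"

fun nodes :: "btree \<Rightarrow> bool list set" where
  "nodes Leaf = {}"
| "nodes (Node l r) = {[]} \<union> Cons False ` nodes l \<union> Cons True ` nodes r"

text \<open>A tree pattern (P,e): e assigns to each non-root vertex i of P the type of
the edge (i, p(i)): True = contiguous, False = non-contiguous.\<close>

type_synonym pattern = "btree \<times> (bool list \<Rightarrow> bool)"

definition contains :: "btree \<Rightarrow> pattern \<Rightarrow> bool" where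
  "contains T Pe \<longleftrightarrow> (case Pe of (P, e) \<Rightarrow>
     (\<exists>f. inj_on f (nodes P) \<and> f ` nodes P \<subseteq> nodes T \<and>
        (\<forall>q d. q @ [d] \<in> nodes P \<longrightarrow>
           (if e (q @ [d]) then f (q @ [d]) = f q @ [d]
            else (\<exists>r. f (q @ [d]) = f q @ d # r)))))"

definition avoiders :: "nat \<Rightarrow> pattern \<Rightarrow> btree set" where
  "avoiders n Q = {T. tsize T = n \<and> \<not> contains T Q}"

definition wilf_equiv :: "pattern \<Rightarrow> pattern \<Rightarrow> bool" where
  "wilf_equiv Q Q' \<longleftrightarrow> (\<forall>n. card (avoiders n Q) = card (avoiders n Q'))"

fun graft :: "btree \<Rightarrow> bool list \<Rightarrow> btree \<Rightarrow> btree" where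
  "graft t [] s = s"
| "graft (Node l r) (False # p) s = Node (graft l p s) r"
| "graft (Node l r) (True # p) s = Node l (graft r p s)"
| "graft Leaf (_ # _) s = Leaf"

definition attach_right :: "btree \<Rightarrow> bool list \<Rightarrow> pattern \<Rightarrow> pattern" where
  "attach_right S x Pe = (case Pe of (P, e) \<Rightarrow>
     (graft S (x @ [True]) P,
      \<lambda>w. if w = x @ [True] then False
          else if take (Suc (length x)) w = x @ [True] then e (drop (Suc (length x)) w)
          else True))"

end

theory Submission
  imports Defs
begin

fun sub :: "btree \<Rightarrow> bool list \<Rightarrow> btree" where
  "sub t [] = t"
| "sub Leaf (_ # _) = Leaf"
| "sub (Node l r) (False # p) = sub l p"
| "sub (Node l r) (True # p) = sub r p"

lemma nodes_sub: "w \<in> nodes T \<longleftrightarrow> sub T w \<noteq> Leaf"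
proof (induction T arbitrary: w)
  case Leaf then show ?case by (cases w) auto
next
  case (Node l r) then show ?case
    by (cases w) (auto, (case_tac a; auto)+)
qed

lemma sub_append: "sub T (p @ q) = sub (sub T p) q"
proof (induction T p rule: sub.induct)
  case (2 uu uv)
  then show ?case by (cases q) auto
qed auto

lemma sub_Leaf[simp]: "sub Leaf q = Leaf"
  by (cases q) auto

lemma nodes_sub2: "q \<in> nodes (sub T p) \<longleftrightarrow> p @ q \<in> nodes T"
  by (simp add: nodes_sub sub_append)

lemma prefix_closed: "p @ q \<in> nodes T \<Longrightarrow> p \<in> nodes T"
  by (metis nodes_sub sub_append sub_Leaf)

lemma Nil_nodes: "T \<noteq> Leaf \<Longrightarrow> [] \<in> nodes T"
  by (cases T) auto

lemma tsize0: "tsize t = 0 \<longleftrightarrow> t = Leaf"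
  by (cases t) auto

fun repl :: "btree \<Rightarrow> bool list set \<Rightarrow> (btree \<Rightarrow> btree) \<Rightarrow> btree" where
  "repl Leaf A g = (if [] \<in> A then g Leaf else Leaf)"
| "repl (Node l r) A g = (if [] \<in> A then g (Node l r)
     else Node (repl l {p. False # p \<in> A} g) (repl r {p. True # p \<in> A} g))"

lemma tsize_repl: "(\<And>t. tsize (g t) = tsize t) \<Longrightarrow> tsize (repl T A g) = tsize T"
  by (induction T arbitrary: A) auto

lemma shift_anti: "\<forall>q\<in>A. \<forall>r. d # p = q @ r \<longrightarrow> r = [] \<Longrightarrow> \<forall>q\<in>{p. d # p \<in> A}. \<forall>r. p = q @ r \<longrightarrow> r = []"
proof (intro ballI allI impI)
  fix q r assume a: "\<forall>q\<in>A. \<forall>r. d # p = q @ r \<longrightarrow> r = []" and q: "q \<in> {p. d # p \<in> A}" and "p = q @ r"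
  then have "d # p = (d # q) @ r" by simp
  then show "r = []" using a q by blast
qed

lemma sub_repl: "g Leaf = Leaf \<Longrightarrow> p \<in> A \<Longrightarrow> (\<forall>q\<in>A. \<forall>r. p = q @ r \<longrightarrow> r = [])
   \<Longrightarrow> sub (repl T A g) p = g (sub T p)"
proof (induction T arbitrary: A p)
  case Leaf
  then show ?case by (cases p) auto
next
  case (Node l r)
  show ?case
  proof (cases p)
    case Nil
    then show ?thesis using Node.prems by simp
  next
    case (Cons d p')
    have n: "[] \<notin> A" using Node.prems(3) Cons by (metis append_Nil list.distinct(1))
    show ?thesis
    proof (cases d)
      case True
      have "sub (repl r {p. True # p \<in> A} g) p' = g (sub r p')"
        using Node.prems Cons True shift_anti[of A True] by (intro Node.IH(2)) auto
      then show ?thesis using n Cons True by simp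
    next
      case False
      have "sub (repl l {p. False # p \<in> A} g) p' = g (sub l p')"
        using Node.prems Cons False shift_anti[of A False] by (intro Node.IH(1)) auto
      then show ?thesis using n Cons False by simp
    qed
  qed
qed

lemma nodes_repl: "\<forall>t. g t = Leaf \<longleftrightarrow> t = Leaf \<Longrightarrow> \<forall>q\<in>A. \<forall>r. w = q @ r \<longrightarrow> r = []
   \<Longrightarrow> (w \<in> nodes (repl T A g) \<longleftrightarrow> w \<in> nodes T)"
proof (induction T arbitrary: A w)
  case Leaf
  have "g Leaf = Leaf" using Leaf.prems(1) by blast
  then have "repl Leaf A g = Leaf" by simp
  then show ?case by simp
next
  case (Node l r)
  show ?case
  proof (cases w)
    case Nil
    have "g (Node l r) \<noteq> Leaf" using Node.prems(1) by blast
    then show ?thesis using Nil by (cases "g (Node l r)") auto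
  next
    case (Cons d w')
    have n: "[] \<notin> A" using Node.prems(2) Cons by (metis append_Nil list.distinct(1))
    have a: "\<forall>q\<in>{p. d # p \<in> A}. \<forall>r. w' = q @ r \<longrightarrow> r = []"
      using Node.prems(2) Cons shift_anti[of A d w'] by blast
    show ?thesis
    proof (cases d)
      case True
      have "w' \<in> nodes (repl r {p. True # p \<in> A} g) \<longleftrightarrow> w' \<in> nodes r"
        using Node.prems(1) a True by (intro Node.IH(2)) auto
      then show ?thesis using n Cons True by auto
    next
      case False
      have "w' \<in> nodes (repl l {p. False # p \<in> A} g) \<longleftrightarrow> w' \<in> nodes l"
        using Node.prems(1) a False by (intro Node.IH(1)) auto
      then show ?thesis using n Cons False by auto
    qed
  qed
qed

lemma repl_inj: "inj g \<Longrightarrow> repl T1 A g = repl T2 A g \<Longrightarrow> T1 = T2"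
proof (induction T1 arbitrary: A T2)
  case Leaf
  show ?case
  proof (cases "[] \<in> A")
    case True
    have "g Leaf = g T2" using Leaf.prems(2) True by (cases T2) simp_all
    then show ?thesis using injD[OF Leaf.prems(1)] by metis
  next
    case False
    then show ?thesis using Leaf.prems(2) by (cases T2) simp_all
  qed
next
  case (Node l r)
  note NP = Node.prems and NIH = Node.IH
  show ?case
  proof (cases "[] \<in> A")
    case True
    have "g (Node l r) = g T2" using Node.prems(2) True by (cases T2) simp_all
    then show ?thesis using injD[OF Node.prems(1)] by metis
  next
    case False
    show ?thesis
    proof (cases T2)
      case Leaf
      have "repl T2 A g = Leaf" using Leaf False by simp
      moreover have "repl (Node l r) A g \<noteq> Leaf" using False by simp
      ultimately show ?thesis using NP(2) by simp
    next
      case (Node l2 r2)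
      then have h1: "repl l {p. False # p \<in> A} g = repl l2 {p. False # p \<in> A} g"
        and h2: "repl r {p. True # p \<in> A} g = repl r2 {p. True # p \<in> A} g"
        using False NP(2) by simp_all
      have "l = l2" by (rule NIH(1)[OF NP(1) h1])
      moreover have "r = r2" by (rule NIH(2)[OF NP(1) h2])
      ultimately show ?thesis using \<open>T2 = Node l2 r2\<close> by simp
    qed
  qed
qed

lemma finite_le: "finite {t. tsize t \<le> n}"
proof (induction n)
  case 0
  have "{t. tsize t \<le> 0} = {Leaf}" using tsize0 by auto
  then show ?case by simp
next
  case (Suc n)
  have "{t. tsize t \<le> Suc n} \<subseteq> insert Leaf ((\<lambda>(l,r). Node l r) ` ({t. tsize t \<le> n} \<times> {t. tsize t \<le> n}))"
  proof
    fix t assume "t \<in> {t. tsize t \<le> Suc n}"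
    then show "t \<in> insert Leaf ((\<lambda>(l,r). Node l r) ` ({t. tsize t \<le> n} \<times> {t. tsize t \<le> n}))"
      by (cases t) force+
  qed
  then show ?case using Suc by (meson finite_SigmaI finite_imageI finite_insert finite_subset)
qed

lemma finite_eq: "finite {t. tsize t = n}"
  by (rule finite_subset[OF _ finite_le[of n]]) auto

lemma contains_sub: "contains (sub T p) (P, e) \<Longrightarrow> contains T (P, e)"
proof -
  assume "contains (sub T p) (P, e)"
  then obtain f where f: "inj_on f (nodes P)" "f ` nodes P \<subseteq> nodes (sub T p)"
    "\<forall>q d. q @ [d] \<in> nodes P \<longrightarrow> (if e (q @ [d]) then f (q @ [d]) = f q @ [d] else \<exists>r. f (q @ [d]) = f q @ d # r)"
    unfolding contains_def by auto
  have "inj_on (\<lambda>w. p @ f w) (nodes P)" using f(1) by (auto simp: inj_on_def)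
  moreover have "(\<lambda>w. p @ f w) ` nodes P \<subseteq> nodes T" using f(2) nodes_sub2 by auto
  moreover have "\<forall>q d. q @ [d] \<in> nodes P \<longrightarrow> (if e (q @ [d]) then p @ f (q @ [d]) = (p @ f q) @ [d] else \<exists>r. p @ f (q @ [d]) = (p @ f q) @ d # r)"
  proof (intro allI impI)
    fix q d assume "q @ [d] \<in> nodes P"
    then have h: "if e (q @ [d]) then f (q @ [d]) = f q @ [d] else \<exists>r. f (q @ [d]) = f q @ d # r"
      using f(3) by blast
    show "if e (q @ [d]) then p @ f (q @ [d]) = (p @ f q) @ [d] else \<exists>r. p @ f (q @ [d]) = (p @ f q) @ d # r"
    proof (cases "e (q @ [d])")
      case True then show ?thesis using h by simp
    next
      case False then show ?thesis using h by simp
    qed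
  qed
  ultimately show ?thesis unfolding contains_def by blast
qed


definition emb :: "btree \<Rightarrow> (bool list \<Rightarrow> bool) \<Rightarrow> btree \<Rightarrow> (bool list \<Rightarrow> bool list) \<Rightarrow> bool" where
  "emb P e T f \<longleftrightarrow> inj_on f (nodes P) \<and> f ` nodes P \<subseteq> nodes T \<and>
     (\<forall>q d. q @ [d] \<in> nodes P \<longrightarrow>
        (if e (q @ [d]) then f (q @ [d]) = f q @ [d] else (\<exists>r. f (q @ [d]) = f q @ d # r)))"

lemma contains_emb: "contains T (P, e) \<longleftrightarrow> (\<exists>f. emb P e T f)"
  by (simp add: contains_def emb_def)

lemma nodes_graft: "x \<in> nodes S \<Longrightarrow> x @ [True] \<notin> nodes S \<Longrightarrow>
  nodes (graft S (x @ [True]) P) = nodes S \<union> (\<lambda>v. x @ True # v) ` nodes P"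
proof (induction S arbitrary: x)
  case Leaf
  then show ?case by simp
next
  case (Node l r)
  show ?case
  proof (cases x)
    case Nil
    then have "r = Leaf" using Node.prems(2) by (cases r) auto
    then show ?thesis using Nil by auto
  next
    case (Cons d x')
    show ?thesis
    proof (cases d)
      case True
      then have a: "x' \<in> nodes r" "x' @ [True] \<notin> nodes r" using Node.prems Cons by auto
      have "graft (Node l r) (x @ [True]) P = Node l (graft r (x' @ [True]) P)"
        using Cons True by simp
      then show ?thesis using Node.IH(2)[OF a] Cons True by (auto simp: image_Un image_image)
    next
      case False
      then have a: "x' \<in> nodes l" "x' @ [True] \<notin> nodes l" using Node.prems Cons by auto
      have "graft (Node l r) (x @ [True]) P = Node (graft l (x' @ [True]) P) r"
        using Cons False by simp
      then show ?thesis using Node.IH(1)[OF a] Cons False by (auto simp: image_Un image_image)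
    qed
  qed
qed

lemma char:
  assumes xS: "x \<in> nodes S" and xT: "x @ [True] \<notin> nodes S" and PL: "P \<noteq> Leaf"
  shows "contains T (attach_right S x (P, e)) \<longleftrightarrow>
    (\<exists>z. (\<forall>s\<in>nodes S. z @ s \<in> nodes T) \<and> contains (sub T (z @ x @ [True])) (P, e))"
proof -
  define eQ where "eQ = (\<lambda>w. if w = x @ [True] then False
          else if take (Suc (length x)) w = x @ [True] then e (drop (Suc (length x)) w)
          else True)"
  define Q where "Q = graft S (x @ [True]) P"
  have AR: "attach_right S x (P, e) = (Q, eQ)" by (simp add: attach_right_def Q_def eQ_def)
  have N: "nodes Q = nodes S \<union> (\<lambda>v. x @ True # v) ` nodes P"
    unfolding Q_def by (rule nodes_graft[OF xS xT])
  have F1: "w \<noteq> x @ True # v" if "w \<in> nodes S" for w v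
  proof
    assume "w = x @ True # v"
    then have "(x @ [True]) @ v \<in> nodes S" using that by simp
    then show False using xT prefix_closed by blast
  qed
  have F2: "eQ w" if "w \<in> nodes S" for w
  proof -
    have "w \<noteq> x @ [True]" using that xT by blast
    moreover have "take (Suc (length x)) w \<noteq> x @ [True]"
    proof
      assume h: "take (Suc (length x)) w = x @ [True]"
      have "w = take (Suc (length x)) w @ drop (Suc (length x)) w" by simp
      then have "w = x @ True # drop (Suc (length x)) w" using h by simp
      then show False using F1[OF that] by blast
    qed
    ultimately show ?thesis unfolding eQ_def by simp
  qed
  have F3: "eQ (x @ True # v) = (if v = [] then False else e v)" for v
  proof -
    have "take (Suc (length x)) (x @ True # v) = x @ [True]" by simp
    moreover have "drop (Suc (length x)) (x @ True # v) = v" by simp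
    ultimately show ?thesis unfolding eQ_def by simp
  qed
  have P0: "[] \<in> nodes P" using PL by (rule Nil_nodes)
  show ?thesis
  proof
    assume "contains T (attach_right S x (P, e))"
    then obtain f where "emb Q eQ T f" unfolding AR contains_emb by blast
    then have inj: "inj_on f (nodes Q)" and img: "f ` nodes Q \<subseteq> nodes T"
      and edge: "\<And>q d. q @ [d] \<in> nodes Q \<Longrightarrow>
        (if eQ (q @ [d]) then f (q @ [d]) = f q @ [d] else (\<exists>r. f (q @ [d]) = f q @ d # r))"
      unfolding emb_def by blast+
    define z where "z = f []"
    have S1: "s \<in> nodes S \<Longrightarrow> f s = z @ s" for s
    proof (induction s rule: rev_induct)
      case Nil
      then show ?case by (simp add: z_def)
    next
      case (snoc d q)
      have q: "q \<in> nodes S" using snoc.prems prefix_closed by blast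
      have "q @ [d] \<in> nodes Q" using snoc.prems N by blast
      then have "f (q @ [d]) = f q @ [d]" using edge[of q d] F2[OF snoc.prems] by simp
      then show ?case using snoc.IH[OF q] by simp
    qed
    have S2: "v \<in> nodes P \<Longrightarrow> \<exists>u. f (x @ True # v) = z @ x @ True # u" for v
    proof (induction v rule: rev_induct)
      case Nil
      have "x @ [True] \<in> nodes Q" using N P0 by force
      then have "\<exists>r. f (x @ [True]) = f x @ True # r" using edge[of x True] F3[of "[]"] by simp
      then show ?case using S1[OF xS] by simp
    next
      case (snoc d q)
      have q: "q \<in> nodes P" using snoc.prems prefix_closed by blast
      obtain u where u: "f (x @ True # q) = z @ x @ True # u" using snoc.IH[OF q] by blast
      have "x @ True # q @ [d] \<in> nodes Q" using snoc.prems N by blast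
      then have "(x @ True # q) @ [d] \<in> nodes Q" by simp
      then have h: "if eQ ((x @ True # q) @ [d]) then f ((x @ True # q) @ [d]) = f (x @ True # q) @ [d]
         else (\<exists>r. f ((x @ True # q) @ [d]) = f (x @ True # q) @ d # r)" by (rule edge)
      show ?case
      proof (cases "eQ ((x @ True # q) @ [d])")
        case True
        then show ?thesis using h u by simp
      next
        case False
        then obtain r where "f ((x @ True # q) @ [d]) = f (x @ True # q) @ d # r" using h by auto
        then show ?thesis using u by simp
      qed
    qed
    define G where "G v = drop (Suc (length (z @ x))) (f (x @ True # v))" for v
    have S3: "v \<in> nodes P \<Longrightarrow> f (x @ True # v) = z @ x @ True # G v" for v
    proof -
      assume "v \<in> nodes P"
      then obtain u where u: "f (x @ True # v) = z @ x @ True # u" using S2 by blast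
      then have "G v = u" unfolding G_def by simp
      then show ?thesis using u by simp
    qed
    have PinQ: "v \<in> nodes P \<Longrightarrow> x @ True # v \<in> nodes Q" for v using N by blast
    have "emb P e (sub T (z @ x @ [True])) G"
      unfolding emb_def
    proof (intro conjI)
      show "inj_on G (nodes P)"
      proof (rule inj_onI)
        fix v1 v2 assume a: "v1 \<in> nodes P" "v2 \<in> nodes P" "G v1 = G v2"
        then have "f (x @ True # v1) = f (x @ True # v2)" using S3 by simp
        then have "x @ True # v1 = x @ True # v2" using inj PinQ a(1,2) by (meson inj_onD)
        then show "v1 = v2" by simp
      qed
      show "G ` nodes P \<subseteq> nodes (sub T (z @ x @ [True]))"
      proof
        fix w assume "w \<in> G ` nodes P"
        then obtain v where v: "v \<in> nodes P" "w = G v" by blast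
        have "f (x @ True # v) \<in> nodes T" using img PinQ[OF v(1)] by blast
        then have "(z @ x @ [True]) @ G v \<in> nodes T" using S3[OF v(1)] by simp
        then show "w \<in> nodes (sub T (z @ x @ [True]))" using v(2) nodes_sub2 by blast
      qed
      show "\<forall>q d. q @ [d] \<in> nodes P \<longrightarrow>
        (if e (q @ [d]) then G (q @ [d]) = G q @ [d] else (\<exists>r. G (q @ [d]) = G q @ d # r))"
      proof (intro allI impI)
        fix q d assume qd: "q @ [d] \<in> nodes P"
        have q: "q \<in> nodes P" using qd prefix_closed by blast
        have "(x @ True # q) @ [d] \<in> nodes Q" using PinQ[OF qd] by simp
        then have h: "if eQ ((x @ True # q) @ [d]) then f ((x @ True # q) @ [d]) = f (x @ True # q) @ [d]
           else (\<exists>r. f ((x @ True # q) @ [d]) = f (x @ True # q) @ d # r)" by (rule edge)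
        have eq: "eQ ((x @ True # q) @ [d]) = e (q @ [d])" using F3[of "q @ [d]"] by simp
        have f1: "f ((x @ True # q) @ [d]) = z @ x @ True # G (q @ [d])" using S3[OF qd] by simp
        have f2: "f (x @ True # q) = z @ x @ True # G q" using S3[OF q] by simp
        show "if e (q @ [d]) then G (q @ [d]) = G q @ [d] else (\<exists>r. G (q @ [d]) = G q @ d # r)"
        proof (cases "e (q @ [d])")
          case True
          then show ?thesis using h eq f1 f2 by simp
        next
          case False
          then show ?thesis using h eq f1 f2 by simp
        qed
      qed
    qed
    moreover have "\<forall>s\<in>nodes S. z @ s \<in> nodes T"
    proof
      fix s assume s: "s \<in> nodes S"
      then have "s \<in> nodes Q" using N by blast
      then have "f s \<in> nodes T" using img by blast
      then show "z @ s \<in> nodes T" using S1[OF s] by simp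
    qed
    ultimately show "\<exists>z. (\<forall>s\<in>nodes S. z @ s \<in> nodes T) \<and> contains (sub T (z @ x @ [True])) (P, e)"
      using contains_emb by blast
  next
    assume "\<exists>z. (\<forall>s\<in>nodes S. z @ s \<in> nodes T) \<and> contains (sub T (z @ x @ [True])) (P, e)"
    then obtain z G where occ: "\<forall>s\<in>nodes S. z @ s \<in> nodes T" and "emb P e (sub T (z @ x @ [True])) G"
      using contains_emb by blast
    then have injG: "inj_on G (nodes P)" and imgG: "G ` nodes P \<subseteq> nodes (sub T (z @ x @ [True]))"
      and edgeG: "\<And>q d. q @ [d] \<in> nodes P \<Longrightarrow>
        (if e (q @ [d]) then G (q @ [d]) = G q @ [d] else (\<exists>r. G (q @ [d]) = G q @ d # r))"
      unfolding emb_def by blast+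
    define f where "f w = (if \<exists>v. w = x @ True # v then z @ x @ True # G (drop (Suc (length x)) w) else z @ w)" for w
    have fS: "s \<in> nodes S \<Longrightarrow> f s = z @ s" for s
      using F1 unfolding f_def by auto
    have fP: "f (x @ True # v) = z @ x @ True # G v" for v
      unfolding f_def by simp
    have NQ: "w \<in> nodes Q \<longleftrightarrow> w \<in> nodes S \<or> (\<exists>v\<in>nodes P. w = x @ True # v)" for w
      using N by blast
    have "emb Q eQ T f"
      unfolding emb_def
    proof (intro conjI)
      show "inj_on f (nodes Q)"
      proof (rule inj_onI)
        fix w1 w2 assume a: "w1 \<in> nodes Q" "w2 \<in> nodes Q" "f w1 = f w2"
        show "w1 = w2"
        proof (cases "w1 \<in> nodes S")
          case w1: True
          show ?thesis
          proof (cases "w2 \<in> nodes S")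
            case True
            then show ?thesis using a(3) fS w1 by simp
          next
            case False
            then obtain v where v: "v \<in> nodes P" "w2 = x @ True # v" using a(2) NQ by blast
            then have "z @ w1 = z @ x @ True # G v" using a(3) fS[OF w1] fP by simp
            then have "w1 = x @ True # G v" by simp
            then show ?thesis using F1[OF w1] by blast
          qed
        next
          case w1: False
          then obtain v1 where v1: "v1 \<in> nodes P" "w1 = x @ True # v1" using a(1) NQ by blast
          show ?thesis
          proof (cases "w2 \<in> nodes S")
            case w2: True
            then have "z @ w2 = z @ x @ True # G v1" using a(3) fS[OF w2] fP v1 by simp
            then have "w2 = x @ True # G v1" by simp
            then show ?thesis using F1[OF w2] by blast
          next
            case False
            then obtain v2 where v2: "v2 \<in> nodes P" "w2 = x @ True # v2" using a(2) NQ by blast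
            then have "G v1 = G v2" using a(3) v1 fP by simp
            then have "v1 = v2" using injG v1(1) v2(1) by (meson inj_onD)
            then show ?thesis using v1 v2 by simp
          qed
        qed
      qed
      show "f ` nodes Q \<subseteq> nodes T"
      proof
        fix y assume "y \<in> f ` nodes Q"
        then obtain w where w: "w \<in> nodes Q" "y = f w" by blast
        show "y \<in> nodes T"
        proof (cases "w \<in> nodes S")
          case True
          then show ?thesis using w occ fS by simp
        next
          case False
          then obtain v where v: "v \<in> nodes P" "w = x @ True # v" using w(1) NQ by blast
          have "G v \<in> nodes (sub T (z @ x @ [True]))" using imgG v(1) by blast
          then have "(z @ x @ [True]) @ G v \<in> nodes T" using nodes_sub2 by blast
          then show ?thesis using w(2) v(2) fP by simp
        qed
      qed
      show "\<forall>q d. q @ [d] \<in> nodes Q \<longrightarrow>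
        (if eQ (q @ [d]) then f (q @ [d]) = f q @ [d] else (\<exists>r. f (q @ [d]) = f q @ d # r))"
      proof (intro allI impI)
        fix q d assume qd: "q @ [d] \<in> nodes Q"
        show "if eQ (q @ [d]) then f (q @ [d]) = f q @ [d] else (\<exists>r. f (q @ [d]) = f q @ d # r)"
        proof (cases "q @ [d] \<in> nodes S")
          case True
          have q: "q \<in> nodes S" using True prefix_closed by blast
          show ?thesis using F2[OF True] fS[OF True] fS[OF q] by simp
        next
          case False
          then obtain v where v: "v \<in> nodes P" "q @ [d] = x @ True # v" using qd NQ by blast
          show ?thesis
          proof (cases v rule: rev_exhaust)
            case Nil
            then have "q @ [d] = x @ [True]" using v by simp
            then have qx: "q = x" "d = True" by simp_all
            have "eQ (x @ [True]) = False" using F3[of "[]"] by simp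
            moreover have "f (x @ [True]) = z @ x @ True # G []" using fP[of "[]"] by simp
            ultimately show ?thesis using qx fS[OF xS] by simp
          next
            case (snoc v' d')
            then have "q @ [d] = (x @ True # v') @ [d']" using v by simp
            then have qv: "q = x @ True # v'" "d = d'" by simp_all
            have vd: "v' @ [d] \<in> nodes P" using v(1) snoc qv by simp
            have eq: "eQ (q @ [d]) = e (v' @ [d])" using F3[of "v' @ [d]"] qv by simp
            have f1: "f (q @ [d]) = z @ x @ True # G (v' @ [d])" using fP[of "v' @ [d]"] qv by simp
            have f2: "f q = z @ x @ True # G v'" using fP qv by simp
            have h: "if e (v' @ [d]) then G (v' @ [d]) = G v' @ [d] else (\<exists>r. G (v' @ [d]) = G v' @ d # r)"
              by (rule edgeG[OF vd])
            show ?thesis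
            proof (cases "e (v' @ [d])")
              case True
              then show ?thesis using h eq f1 f2 by simp
            next
              case False
              then show ?thesis using h eq f1 f2 by simp
            qed
          qed
        qed
      qed
    qed
    then show "contains T (attach_right S x (P, e))" unfolding AR contains_emb by blast
  qed
qed


definition occ :: "btree \<Rightarrow> btree \<Rightarrow> bool list \<Rightarrow> bool" where
  "occ S T z \<longleftrightarrow> (\<forall>s\<in>nodes S. z @ s \<in> nodes T)"

definition mark :: "btree \<Rightarrow> bool list \<Rightarrow> btree \<Rightarrow> bool list \<Rightarrow> bool" where
  "mark S x T y \<longleftrightarrow> (\<exists>z. y = z @ x \<and> occ S T z)"

definition top :: "btree \<Rightarrow> bool list \<Rightarrow> btree \<Rightarrow> bool list \<Rightarrow> bool" where
  "top S x T y \<longleftrightarrow> mark S x T y \<and> \<not> (\<exists>y' r. mark S x T y' \<and> y = y' @ True # r)"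

definition AA :: "btree \<Rightarrow> bool list \<Rightarrow> btree \<Rightarrow> bool list set" where
  "AA S x T = {y @ [True] | y. top S x T y}"

lemma M0: "mark S x T y \<Longrightarrow> \<exists>y0. top S x T y0 \<and> (y = y0 \<or> (\<exists>r. y = y0 @ True # r))"
proof (induction "length y" arbitrary: y rule: less_induct)
  case less
  show ?case
  proof (cases "top S x T y")
    case True
    then show ?thesis by blast
  next
    case False
    then obtain y' r where y': "mark S x T y'" "y = y' @ True # r" using less.prems top_def by blast
    then have "length y' < length y" by simp
    then obtain y0 where y0: "top S x T y0" "y' = y0 \<or> (\<exists>r. y' = y0 @ True # r)"
      using less.hyps y'(1) by blast
    show ?thesis
    proof (cases "y' = y0")
      case True
      then show ?thesis using y0 y' by blast
    next
      case False
      then obtain r' where "y' = y0 @ True # r'" using y0 by blast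
      then have "y = y0 @ True # (r' @ True # r)" using y' by simp
      then show ?thesis using y0 by blast
    qed
  qed
qed

lemma M1:
  assumes xS: "x \<in> nodes S" and xT: "x @ [True] \<notin> nodes S" and PL: "P \<noteq> Leaf"
  shows "\<not> contains T (attach_right S x (P, e)) \<longleftrightarrow>
    (\<forall>y. top S x T y \<longrightarrow> \<not> contains (sub T (y @ [True])) (P, e))"
proof
  assume a: "\<not> contains T (attach_right S x (P, e))"
  show "\<forall>y. top S x T y \<longrightarrow> \<not> contains (sub T (y @ [True])) (P, e)"
  proof (intro allI impI notI)
    fix y assume "top S x T y" "contains (sub T (y @ [True])) (P, e)"
    moreover then obtain z where "y = z @ x" "occ S T z" unfolding top_def mark_def by blast
    ultimately have "\<exists>z. (\<forall>s\<in>nodes S. z @ s \<in> nodes T) \<and> contains (sub T (z @ x @ [True])) (P, e)"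
      unfolding occ_def by auto
    then show False using a char[OF xS xT PL] by blast
  qed
next
  assume a: "\<forall>y. top S x T y \<longrightarrow> \<not> contains (sub T (y @ [True])) (P, e)"
  show "\<not> contains T (attach_right S x (P, e))"
  proof
    assume "contains T (attach_right S x (P, e))"
    then obtain z where z: "occ S T z" "contains (sub T (z @ x @ [True])) (P, e)"
      using char[OF xS xT PL] unfolding occ_def by blast
    then have "mark S x T (z @ x)" unfolding mark_def by blast
    then obtain y0 where y0: "top S x T y0" "z @ x = y0 \<or> (\<exists>r. z @ x = y0 @ True # r)"
      using M0 by blast
    have "contains (sub T (y0 @ [True])) (P, e)"
    proof (cases "z @ x = y0")
      case True
      have "z @ x @ [True] = y0 @ [True]" using True by (metis append.assoc)
      then show ?thesis using z(2) by metis
    next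
      case False
      then obtain r where "z @ x = y0 @ True # r" using y0 by blast
      then have "z @ x @ [True] = (y0 @ [True]) @ (r @ [True])"
        by (metis append.assoc append_Cons append_Nil)
      then have "sub T (z @ x @ [True]) = sub (sub T (y0 @ [True])) (r @ [True])"
        by (metis sub_append)
      then show ?thesis using z(2) contains_sub by metis
    qed
    then show False using a y0(1) by blast
  qed
qed

lemma M2:
  assumes H3: "\<forall>u. u @ [True] \<in> nodes S \<longrightarrow>
           ((u @ [True, False] \<notin> nodes S \<and> u @ [True, True] \<notin> nodes S)
            \<or> (\<exists>r. x = u @ [True] @ r))"
    and s: "s \<in> nodes S" and eq: "z @ s = (y0 @ [True]) @ r" and r: "r \<noteq> []"
  shows "\<exists>r'. z @ x = (y0 @ [True]) @ r'"
proof -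
  obtain us where us: "(z = (y0 @ [True]) @ us \<and> us @ s = r) \<or> (z @ us = y0 @ [True] \<and> s = us @ r)"
    using eq append_eq_append_conv2[of z s "y0 @ [True]" r] by blast
  show ?thesis
  proof (cases "z = (y0 @ [True]) @ us \<and> us @ s = r")
    case True
    then show ?thesis by auto
  next
    case False
    then have h: "z @ us = y0 @ [True]" "s = us @ r" using us by blast+
    show ?thesis
    proof (cases us rule: rev_exhaust)
      case Nil
      then show ?thesis using h by auto
    next
      case (snoc u0 c)
      then have c: "c = True" and zu: "z @ u0 = y0" using h(1) by auto
      obtain d r2 where r2: "r = d # r2" using r by (cases r) auto
      have "(u0 @ [True, d]) @ r2 \<in> nodes S" using s h(2) snoc c r2 by simp
      then have ud: "u0 @ [True, d] \<in> nodes S" by (rule prefix_closed)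
      have "(u0 @ [True]) @ [d] \<in> nodes S" using ud by simp
      then have "u0 @ [True] \<in> nodes S" by (rule prefix_closed)
      then have "(u0 @ [True, False] \<notin> nodes S \<and> u0 @ [True, True] \<notin> nodes S) \<or> (\<exists>r. x = u0 @ [True] @ r)"
        using H3 by blast
      moreover have "\<not> (u0 @ [True, False] \<notin> nodes S \<and> u0 @ [True, True] \<notin> nodes S)"
        using ud by (cases d) auto
      ultimately obtain r' where "x = u0 @ [True] @ r'" by blast
      then have "z @ x = (y0 @ [True]) @ r'" using zu by simp
      then show ?thesis by blast
    qed
  qed
qed

lemma M3:
  assumes H3: "\<forall>u. u @ [True] \<in> nodes S \<longrightarrow>
           ((u @ [True, False] \<notin> nodes S \<and> u @ [True, True] \<notin> nodes S)
            \<or> (\<exists>r. x = u @ [True] @ r))"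
    and gs: "\<forall>t. tsize (g t) = tsize t"
  shows "AA S x (repl T (AA S x T) g) = AA S x T"
    and "top S x T y \<Longrightarrow> sub (repl T (AA S x T) g) (y @ [True]) = g (sub T (y @ [True]))"
proof -
  define A where "A = AA S x T"
  define T' where "T' = repl T A g"
  have gL: "\<forall>t. g t = Leaf \<longleftrightarrow> t = Leaf" using gs tsize0 by metis
  define C where "C y \<longleftrightarrow> (\<exists>a\<in>A. \<exists>r. y = a @ r)" for y
  have Cext: "C y' \<Longrightarrow> C (y' @ True # r)" for y' r unfolding C_def by (metis append.assoc)
  have a: "mark S x T' y \<longleftrightarrow> mark S x T y" if ny: "\<not> C y" for y
  proof -
    have "occ S T' z \<longleftrightarrow> occ S T z" if yz: "y = z @ x" for z
    proof -
      have "z @ s \<in> nodes T' \<longleftrightarrow> z @ s \<in> nodes T" if s: "s \<in> nodes S" for s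
        unfolding T'_def
      proof (rule nodes_repl[OF gL])
        show "\<forall>q\<in>A. \<forall>r. z @ s = q @ r \<longrightarrow> r = []"
        proof (intro ballI allI impI)
          fix q r assume q: "q \<in> A" and e: "z @ s = q @ r"
          obtain y0 where y0: "q = y0 @ [True]" "top S x T y0" using q unfolding A_def AA_def by blast
          show "r = []"
          proof (rule ccontr)
            assume "r \<noteq> []"
            then obtain r' where "z @ x = (y0 @ [True]) @ r'" using M2[OF H3 s] e y0(1) by blast
            then have "C y" using yz q y0(1) unfolding C_def by blast
            then show False using ny by blast
          qed
        qed
      qed
      then show ?thesis unfolding occ_def by blast
    qed
    then show ?thesis unfolding mark_def by blast
  qed
  have b: "\<not> C y" if "top S x T y" for y
  proof
    assume "C y"
    then obtain a r where "a \<in> A" "y = a @ r" unfolding C_def by blast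
    then obtain y1 where "top S x T y1" "y = y1 @ True # r" unfolding A_def AA_def by auto
    then show False using that unfolding top_def by blast
  qed
  have c: "top S x T' y \<longleftrightarrow> top S x T y" for y
  proof
    assume t: "top S x T y"
    have nc: "\<not> C y" using b t by blast
    have "mark S x T' y" using a[OF nc] t unfolding top_def by blast
    moreover have "\<not> (\<exists>y' r. mark S x T' y' \<and> y = y' @ True # r)"
    proof
      assume "\<exists>y' r. mark S x T' y' \<and> y = y' @ True # r"
      then obtain y' r where y': "mark S x T' y'" "y = y' @ True # r" by blast
      then have "\<not> C y'" using nc Cext by blast
      then have "mark S x T y'" using a y'(1) by blast
      then show False using t y'(2) unfolding top_def by blast
    qed
    ultimately show "top S x T' y" unfolding top_def by blast
  next
    assume t: "top S x T' y"
    have nc: "\<not> C y"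
    proof
      assume "C y"
      then obtain a r where "a \<in> A" "y = a @ r" unfolding C_def by blast
      then obtain y1 where y1: "top S x T y1" "y = y1 @ True # r" unfolding A_def AA_def by auto
      have "mark S x T y1" using y1(1) unfolding top_def by blast
      then have "mark S x T' y1" using a b[OF y1(1)] by blast
      then show False using t y1(2) unfolding top_def by blast
    qed
    have "mark S x T y" using a[OF nc] t unfolding top_def by blast
    moreover have "\<not> (\<exists>y' r. mark S x T y' \<and> y = y' @ True # r)"
    proof
      assume "\<exists>y' r. mark S x T y' \<and> y = y' @ True # r"
      then obtain y' r where y': "mark S x T y'" "y = y' @ True # r" by blast
      then have "\<not> C y'" using nc Cext by blast
      then have "mark S x T' y'" using a y'(1) by blast
      then show False using t y'(2) unfolding top_def by blast
    qed
    ultimately show "top S x T y" unfolding top_def by blast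
  qed
  show "AA S x (repl T (AA S x T) g) = AA S x T"
    using c unfolding T'_def A_def AA_def by simp
  assume t: "top S x T y"
  show "sub (repl T (AA S x T) g) (y @ [True]) = g (sub T (y @ [True]))"
  proof (rule sub_repl)
    show "g Leaf = Leaf" using gL by blast
    show "y @ [True] \<in> AA S x T" using t unfolding AA_def by blast
    show "\<forall>q\<in>AA S x T. \<forall>r. y @ [True] = q @ r \<longrightarrow> r = []"
    proof (intro ballI allI impI)
      fix q r assume q: "q \<in> AA S x T" and e: "y @ [True] = q @ r"
      obtain y1 where y1: "q = y1 @ [True]" "top S x T y1" using q unfolding AA_def by blast
      show "r = []"
      proof (rule ccontr)
        assume "r \<noteq> []"
        then obtain r' where "r = r' @ [True]" using e by (cases r rule: rev_exhaust) auto
        then have "y = y1 @ True # r'" using e y1(1) by simp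
        moreover have "mark S x T y1" using y1(2) unfolding top_def by blast
        ultimately show False using t unfolding top_def by blast
      qed
    qed
  qed
qed


lemma exists_g:
  assumes W: "wilf_equiv (P, e) (P', e')"
  shows "\<exists>g. inj g \<and> (\<forall>t. tsize (g t) = tsize t) \<and> (\<forall>t. \<not> contains t (P, e) \<longrightarrow> \<not> contains (g t) (P', e'))"
proof -
  define B where "B n = {t. tsize t = n}" for n
  have ex: "\<exists>gn. inj_on gn (B n) \<and> gn ` B n \<subseteq> B n \<and> (\<forall>t\<in>B n. \<not> contains t (P, e) \<longrightarrow> \<not> contains (gn t) (P', e'))" for n
  proof -
    define Av where "Av = avoiders n (P, e)"
    define Av' where "Av' = avoiders n (P', e')"
    have fB: "finite (B n)" unfolding B_def by (rule finite_eq)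
    have sub1: "Av \<subseteq> B n" and sub2: "Av' \<subseteq> B n" unfolding Av_def Av'_def avoiders_def B_def by auto
    have fA: "finite Av" "finite Av'" using fB sub1 sub2 finite_subset by blast+
    have cA: "card Av = card Av'" using W unfolding wilf_equiv_def Av_def Av'_def by blast
    obtain h1 where h1: "bij_betw h1 Av Av'" using finite_same_card_bij[OF fA cA] by blast
    have "card (B n - Av) = card (B n - Av')"
      using card_Diff_subset[OF fA(1) sub1] card_Diff_subset[OF fA(2) sub2] cA by simp
    moreover have "finite (B n - Av)" "finite (B n - Av')" using fB by auto
    ultimately obtain h2 where h2: "bij_betw h2 (B n - Av) (B n - Av')"
      using finite_same_card_bij by metis
    define gn where "gn t = (if t \<in> Av then h1 t else h2 t)" for t
    have im1: "t \<in> Av \<Longrightarrow> gn t \<in> Av'" for t using h1 unfolding gn_def bij_betw_def by auto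
    have im2: "t \<in> B n - Av \<Longrightarrow> gn t \<in> B n - Av'" for t using h2 unfolding gn_def bij_betw_def by auto
    have "inj_on gn (B n)"
    proof (rule inj_onI)
      fix t1 t2 assume a: "t1 \<in> B n" "t2 \<in> B n" "gn t1 = gn t2"
      show "t1 = t2"
      proof (cases "t1 \<in> Av")
        case True
        show ?thesis
        proof (cases "t2 \<in> Av")
          case True
          then show ?thesis using a \<open>t1 \<in> Av\<close> h1 unfolding gn_def bij_betw_def by (auto dest: inj_onD)
        next
          case False
          then show ?thesis using a im1[OF \<open>t1 \<in> Av\<close>] im2[of t2] by auto
        qed
      next
        case False
        show ?thesis
        proof (cases "t2 \<in> Av")
          case True
          then show ?thesis using a im1[OF True] im2[of t1] False by auto
        next
          case False
          then show ?thesis using a \<open>t1 \<notin> Av\<close> h2 unfolding gn_def bij_betw_def by (auto dest: inj_onD)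
        qed
      qed
    qed
    moreover have "gn ` B n \<subseteq> B n" using im1 im2 sub2 by blast
    moreover have "\<forall>t\<in>B n. \<not> contains t (P, e) \<longrightarrow> \<not> contains (gn t) (P', e')"
    proof (intro ballI impI)
      fix t assume "t \<in> B n" "\<not> contains t (P, e)"
      then have "t \<in> Av" unfolding Av_def avoiders_def B_def by simp
      then have "gn t \<in> Av'" by (rule im1)
      then show "\<not> contains (gn t) (P', e')" unfolding Av'_def avoiders_def by simp
    qed
    ultimately show ?thesis by blast
  qed
  then obtain G where G: "\<And>n. inj_on (G n) (B n) \<and> G n ` B n \<subseteq> B n \<and> (\<forall>t\<in>B n. \<not> contains t (P, e) \<longrightarrow> \<not> contains (G n t) (P', e'))"
    by metis
  define g where "g t = G (tsize t) t" for t
  have gs: "tsize (g t) = tsize t" for t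
  proof -
    have "t \<in> B (tsize t)" unfolding B_def by simp
    then have "G (tsize t) t \<in> B (tsize t)" using G by blast
    then show ?thesis unfolding g_def B_def by simp
  qed
  have "inj g"
  proof (rule injI)
    fix t1 t2 assume a: "g t1 = g t2"
    then have "tsize t1 = tsize t2" using gs by metis
    moreover have "t1 \<in> B (tsize t1)" "t2 \<in> B (tsize t1)" using calculation unfolding B_def by simp_all
    ultimately show "t1 = t2" using a G unfolding g_def by (metis inj_onD)
  qed
  moreover have "\<forall>t. \<not> contains t (P, e) \<longrightarrow> \<not> contains (g t) (P', e')"
  proof (intro allI impI)
    fix t assume "\<not> contains t (P, e)"
    moreover have "t \<in> B (tsize t)" unfolding B_def by simp
    ultimately show "\<not> contains (g t) (P', e')" using G unfolding g_def by blast
  qed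
  ultimately show ?thesis using gs by blast
qed

lemma top_AA: "top S x T y \<longleftrightarrow> y @ [True] \<in> AA S x T"
  unfolding AA_def by auto

lemma half:
  assumes xS: "x \<in> nodes S" and xT: "x @ [True] \<notin> nodes S"
    and H3: "\<forall>u. u @ [True] \<in> nodes S \<longrightarrow>
           ((u @ [True, False] \<notin> nodes S \<and> u @ [True, True] \<notin> nodes S)
            \<or> (\<exists>r. x = u @ [True] @ r))"
    and PL: "P \<noteq> Leaf" and PL': "P' \<noteq> Leaf"
    and W: "wilf_equiv (P, e) (P', e')"
  shows "card (avoiders n (attach_right S x (P, e))) \<le> card (avoiders n (attach_right S x (P', e')))"
proof -
  obtain g where g: "inj g" "\<forall>t. tsize (g t) = tsize t" "\<forall>t. \<not> contains t (P, e) \<longrightarrow> \<not> contains (g t) (P', e')"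
    using exists_g[OF W] by blast
  define Phi where "Phi T = repl T (AA S x T) g" for T
  have AAPhi: "AA S x (Phi T) = AA S x T" for T unfolding Phi_def by (rule M3(1)[OF H3 g(2)])
  have topPhi: "top S x (Phi T) y \<longleftrightarrow> top S x T y" for T y using AAPhi top_AA by metis
  have "inj_on Phi (avoiders n (attach_right S x (P, e)))"
  proof (rule inj_onI)
    fix T1 T2 assume "Phi T1 = Phi T2"
    moreover then have "AA S x T1 = AA S x T2" using AAPhi by metis
    ultimately have "repl T1 (AA S x T1) g = repl T2 (AA S x T1) g" unfolding Phi_def by simp
    then show "T1 = T2" using repl_inj[OF g(1)] by blast
  qed
  moreover have "Phi ` avoiders n (attach_right S x (P, e)) \<subseteq> avoiders n (attach_right S x (P', e'))"
  proof
    fix T' assume "T' \<in> Phi ` avoiders n (attach_right S x (P, e))"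
    then obtain T where T: "T \<in> avoiders n (attach_right S x (P, e))" "T' = Phi T" by blast
    have sz: "tsize T' = n" using T tsize_repl[of g] g(2) unfolding Phi_def avoiders_def by simp
    have av: "\<forall>y. top S x T y \<longrightarrow> \<not> contains (sub T (y @ [True])) (P, e)"
      using T(1) M1[OF xS xT PL] unfolding avoiders_def by blast
    have "\<forall>y. top S x T' y \<longrightarrow> \<not> contains (sub T' (y @ [True])) (P', e')"
    proof (intro allI impI)
      fix y assume "top S x T' y"
      then have ty: "top S x T y" using T(2) topPhi by blast
      then have "sub T' (y @ [True]) = g (sub T (y @ [True]))"
        using M3(2)[OF H3 g(2) ty] T(2) unfolding Phi_def by simp
      then show "\<not> contains (sub T' (y @ [True])) (P', e')" using av ty g(3) by simp
    qed
    then have "\<not> contains T' (attach_right S x (P', e'))" using M1[OF xS xT PL'] by blast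
    then show "T' \<in> avoiders n (attach_right S x (P', e'))" using sz unfolding avoiders_def by simp
  qed
  moreover have "finite (avoiders n (attach_right S x (P', e')))"
    by (rule finite_subset[OF _ finite_eq[of n]]) (auto simp: avoiders_def)
  ultimately show ?thesis by (rule card_inj_on_le)
qed

theorem lemma17:
  fixes S P P' :: btree and x :: "bool list" and e e' :: "bool list \<Rightarrow> bool" and k :: nat
  assumes "x \<in> nodes S"
    and "x @ [True] \<notin> nodes S"
    and "\<forall>u. u @ [True] \<in> nodes S \<longrightarrow>
           ((u @ [True, False] \<notin> nodes S \<and> u @ [True, True] \<notin> nodes S)
            \<or> (\<exists>r. x = u @ [True] @ r))"
    and "1 \<le> k" and "tsize P = k" and "tsize P' = k"
    and "wilf_equiv (P, e) (P', e')"
  shows "wilf_equiv (attach_right S x (P, e)) (attach_right S x (P', e'))"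
proof -
  have PL: "P \<noteq> Leaf" using assms(4,5) by auto
  have PL': "P' \<noteq> Leaf" using assms(4,6) by auto
  have W': "wilf_equiv (P', e') (P, e)" using assms(7) unfolding wilf_equiv_def by simp
  show ?thesis unfolding wilf_equiv_def
  proof
    fix n
    show "card (avoiders n (attach_right S x (P, e))) = card (avoiders n (attach_right S x (P', e')))"
      using half[OF assms(1,2,3) PL PL' assms(7), of n] half[OF assms(1,2,3) PL' PL W', of n] by simp
  qed
qed

end
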